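(* Let $G=(V,E,p,(V_{E},V_{O}))$ be a parity game, let $D\subseteq V$ be an Odd-dominion of $G$, and let $k$ be an odd number such that $p(w)\ge k$ for all $w\in D$. Let $v\in D$ with $p(v)=k$, and let $\sigma_D$ be a strategy of Odd that is winning for Odd on $D$ and closed on $D$. Let $A=\mathrm{Attr}^{\ge k}_{O}(\{v\})$ and let $\sigma_{Attr}$ be the strategy of Odd defined on $(A\setminus\{v\})\cap V_{O}$ attracting towards $v$. Let $\sigma$ be the strategy defined on $\mathrm{dom}(\sigma_{Attr})\cup\mathrm{dom}(\sigma_D)$ as $\sigma_{Attr}(w)$ for $w\in\mathrm{dom}(\sigma_{Attr})$ and as $\sigma_D(w)$ for $w\in\mathrm{dom}(\sigma_D)\setminus\mathrm{dom}(\sigma_{Attr})$. Then $\sigma$, on $D\cup A$, is winning for Odd, and plays consistent with it starting in $D\cup A$ only visit priorities greater than or equal to $k$.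
   Context: A parity game $G=(V,E,p,(V_{E},V_{O}))$: finite $V$ partitioned into $V_{E}$ (Even) and $V_{O}$ (Odd), total edge relation $E$, priorities $p:V\to\mathbb{N}$; $\mathrm{post}(v)=\{w:(v,w)\in E\}$, $V_{\ge k}=\{v:p(v)\ge k\}$. Plays are infinite paths; Even wins iff the least priority occurring infinitely often is even. A set $D$ is an Odd-dominion if Odd has a strategy such that every play starting in $D$ consistent with it is won by Odd and stays in $D$; a strategy is closed on $D$ if all consistent plays from $D$ stay in $D$. Guarded attractor: for a priority $k$ and $U\subseteq V_{\ge k}$, $\mathrm{Attr}^{\ge k}_{O}(U)$ is the least set $A$ with $U\subseteq A\subseteq V_{\ge k}$ such that every $u\in V_{O}\cap V_{\ge k}$ with $\mathrm{post}(u)\cap A\ne\emptyset$ is in $A$, and every $u\in V_{E}\cap V_{\ge k}$ with $\mathrm{post}(u)\subseteq A$ is in $A$. Computing $A$ as the limit of the increasing chain $A_0=U$, $A_{j+1}=A_j\cup\{$vertices added by the rules from $A_j\}$, the strategy attracting towards $U$ maps each $u\in (A\setminus U)\cap V_{O}$ first added in $A_{j+1}$ to a successor in $A_j$. *)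

theory Defs
  imports Main
begin

definition parity_game :: "'v set \<Rightarrow> ('v \<times> 'v) set \<Rightarrow> ('v \<Rightarrow> nat) \<Rightarrow> 'v set \<Rightarrow> 'v set \<Rightarrow> bool" where
  "parity_game V E p VE VO \<longleftrightarrow>
     finite V \<and> E \<subseteq> V \<times> V \<and> (\<forall>v\<in>V. \<exists>w. (v, w) \<in> E)
     \<and> VE \<union> VO = V \<and> VE \<inter> VO = {}"

definition post :: "('v \<times> 'v) set \<Rightarrow> 'v \<Rightarrow> 'v set" where
  "post E v = {w. (v, w) \<in> E}"

definition V_ge :: "'v set \<Rightarrow> ('v \<Rightarrow> nat) \<Rightarrow> nat \<Rightarrow> 'v set" where
  "V_ge V p k = {v \<in> V. p v \<ge> k}"

definition is_play :: "('v \<times> 'v) set \<Rightarrow> (nat \<Rightarrow> 'v) \<Rightarrow> bool" where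
  "is_play E P \<longleftrightarrow> (\<forall>i. (P i, P (Suc i)) \<in> E)"

definition odd_wins_play :: "('v \<Rightarrow> nat) \<Rightarrow> (nat \<Rightarrow> 'v) \<Rightarrow> bool" where
  "odd_wins_play p P \<longleftrightarrow> odd (LEAST q. \<exists>\<^sub>\<infinity> i. p (P i) = q)"

definition odd_strategy :: "('v \<times> 'v) set \<Rightarrow> 'v set \<Rightarrow> ('v \<Rightarrow> 'v option) \<Rightarrow> bool" where
  "odd_strategy E VO \<sigma> \<longleftrightarrow> dom \<sigma> \<subseteq> VO \<and> (\<forall>u\<in>dom \<sigma>. (u, the (\<sigma> u)) \<in> E)"

definition consistent :: "('v \<times> 'v) set \<Rightarrow> ('v \<Rightarrow> 'v option) \<Rightarrow> (nat \<Rightarrow> 'v) \<Rightarrow> bool" where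
  "consistent E \<sigma> P \<longleftrightarrow> is_play E P \<and> (\<forall>i. P i \<in> dom \<sigma> \<longrightarrow> \<sigma> (P i) = Some (P (Suc i)))"

definition odd_winning_on :: "('v \<times> 'v) set \<Rightarrow> ('v \<Rightarrow> nat) \<Rightarrow> ('v \<Rightarrow> 'v option) \<Rightarrow> 'v set \<Rightarrow> bool" where
  "odd_winning_on E p \<sigma> D \<longleftrightarrow> (\<forall>P. consistent E \<sigma> P \<and> P 0 \<in> D \<longrightarrow> odd_wins_play p P)"

definition closed_on :: "('v \<times> 'v) set \<Rightarrow> ('v \<Rightarrow> 'v option) \<Rightarrow> 'v set \<Rightarrow> bool" where
  "closed_on E \<sigma> D \<longleftrightarrow> (\<forall>P. consistent E \<sigma> P \<and> P 0 \<in> D \<longrightarrow> (\<forall>i. P i \<in> D))"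

definition odd_dominion :: "'v set \<Rightarrow> ('v \<times> 'v) set \<Rightarrow> ('v \<Rightarrow> nat) \<Rightarrow> 'v set \<Rightarrow> 'v set \<Rightarrow> bool" where
  "odd_dominion V E p VO D \<longleftrightarrow> D \<subseteq> V \<and>
     (\<exists>\<sigma>. odd_strategy E VO \<sigma> \<and> odd_winning_on E p \<sigma> D \<and> closed_on E \<sigma> D)"

definition attr_closed :: "'v set \<Rightarrow> ('v \<times> 'v) set \<Rightarrow> ('v \<Rightarrow> nat) \<Rightarrow> 'v set \<Rightarrow> 'v set \<Rightarrow> nat \<Rightarrow> 'v set \<Rightarrow> bool" where
  "attr_closed V E p VE VO k A \<longleftrightarrow>
     (\<forall>u \<in> VO \<inter> V_ge V p k. post E u \<inter> A \<noteq> {} \<longrightarrow> u \<in> A) \<and>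
     (\<forall>u \<in> VE \<inter> V_ge V p k. post E u \<subseteq> A \<longrightarrow> u \<in> A)"

definition attr :: "'v set \<Rightarrow> ('v \<times> 'v) set \<Rightarrow> ('v \<Rightarrow> nat) \<Rightarrow> 'v set \<Rightarrow> 'v set \<Rightarrow> nat \<Rightarrow> 'v set \<Rightarrow> 'v set" where
  "attr V E p VE VO k U =
     \<Inter> {A. U \<subseteq> A \<and> A \<subseteq> V_ge V p k \<and> attr_closed V E p VE VO k A}"

definition attr_step :: "'v set \<Rightarrow> ('v \<times> 'v) set \<Rightarrow> ('v \<Rightarrow> nat) \<Rightarrow> 'v set \<Rightarrow> 'v set \<Rightarrow> nat \<Rightarrow> 'v set \<Rightarrow> 'v set" where
  "attr_step V E p VE VO k A =
     A \<union> {u \<in> VO \<inter> V_ge V p k. post E u \<inter> A \<noteq> {}}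
       \<union> {u \<in> VE \<inter> V_ge V p k. post E u \<subseteq> A}"

definition attr_chain :: "'v set \<Rightarrow> ('v \<times> 'v) set \<Rightarrow> ('v \<Rightarrow> nat) \<Rightarrow> 'v set \<Rightarrow> 'v set \<Rightarrow> nat \<Rightarrow> 'v set \<Rightarrow> nat \<Rightarrow> 'v set" where
  "attr_chain V E p VE VO k U j = (attr_step V E p VE VO k ^^ j) U"

definition attracting_strategy :: "'v set \<Rightarrow> ('v \<times> 'v) set \<Rightarrow> ('v \<Rightarrow> nat) \<Rightarrow> 'v set \<Rightarrow> 'v set \<Rightarrow> nat \<Rightarrow> 'v set \<Rightarrow> ('v \<Rightarrow> 'v option) \<Rightarrow> bool" where
  "attracting_strategy V E p VE VO k U \<sigma> \<longleftrightarrow>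
     dom \<sigma> = (attr V E p VE VO k U - U) \<inter> VO \<and>
     (\<forall>u \<in> dom \<sigma>. \<forall>j. u \<in> attr_chain V E p VE VO k U (Suc j)
                         \<and> u \<notin> attr_chain V E p VE VO k U j
          \<longrightarrow> the (\<sigma> u) \<in> post E u \<and> the (\<sigma> u) \<in> attr_chain V E p VE VO k U j)"

end

theory Submission
  imports Defs "HOL-Library.Infinite_Set"
begin

lemma chain_Suc: "attr_chain V E p VE VO k U (Suc j) = attr_step V E p VE VO k (attr_chain V E p VE VO k U j)"
  by (simp add: attr_chain_def)

lemma chain_0: "attr_chain V E p VE VO k U 0 = U"
  by (simp add: attr_chain_def)

lemma chain_mono_le: "i \<le> j \<Longrightarrow> attr_chain V E p VE VO k U i \<subseteq> attr_chain V E p VE VO k U j"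
  by (rule lift_Suc_mono_le[where f="attr_chain V E p VE VO k U"])
     (auto simp: chain_Suc attr_step_def)

lemma chain_sub_closed:
  assumes "U \<subseteq> A" "attr_closed V E p VE VO k A"
  shows "attr_chain V E p VE VO k U j \<subseteq> A"
proof (induction j)
  case 0 then show ?case using assms by (simp add: chain_0)
next
  case (Suc j)
  then show ?case using assms(2) unfolding chain_Suc attr_step_def attr_closed_def by blast
qed

lemma chain_sub_attr: "attr_chain V E p VE VO k U j \<subseteq> attr V E p VE VO k U"
  unfolding attr_def using chain_sub_closed by blast

lemma chain_sub_Vge: "U \<subseteq> V_ge V p k \<Longrightarrow> attr_chain V E p VE VO k U j \<subseteq> V_ge V p k"
  by (induction j) (auto simp: chain_0 chain_Suc attr_step_def)

lemma finite_in_chain: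
  fixes C :: "nat \<Rightarrow> 'a set"
  assumes "finite F" "F \<subseteq> (\<Union>j. C j)" "\<And>i j. i \<le> j \<Longrightarrow> C i \<subseteq> (C j :: 'a set)"
  shows "\<exists>j. F \<subseteq> C j"
  using assms(1,2)
proof (induction F rule: finite_induct)
  case empty then show ?case by auto
next
  case (insert x F)
  then obtain a where a: "x \<in> C a" by auto
  from insert obtain b where b: "F \<subseteq> C b" by auto
  have "C a \<subseteq> C (max a b)" by (rule assms(3)) simp
  with a have "x \<in> C (max a b)" by blast
  moreover have "C b \<subseteq> C (max a b)" by (rule assms(3)) simp
  with b have "F \<subseteq> C (max a b)" by blast
  ultimately show ?case by (intro exI[of _ "max a b"]) simp
qed

lemma attr_sub_chain:
  assumes fin: "finite V" and EV: "E \<subseteq> V \<times> V" and U: "U \<subseteq> V_ge V p k"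
  shows "attr V E p VE VO k U \<subseteq> (\<Union>j. attr_chain V E p VE VO k U j)"
proof -
  let ?C = "attr_chain V E p VE VO k U"
  have "attr_closed V E p VE VO k (\<Union>j. ?C j)"
    unfolding attr_closed_def
  proof (intro conjI ballI impI)
    fix u assume u: "u \<in> VO \<inter> V_ge V p k" "post E u \<inter> (\<Union>j. ?C j) \<noteq> {}"
    then obtain w j where "w \<in> post E u" "w \<in> ?C j" by blast
    then have "u \<in> ?C (Suc j)" using u(1) unfolding chain_Suc attr_step_def by blast
    then show "u \<in> (\<Union>j. ?C j)" by blast
  next
    fix u assume u: "u \<in> VE \<inter> V_ge V p k" "post E u \<subseteq> (\<Union>j. ?C j)"
    have "post E u \<subseteq> V" using EV by (auto simp: post_def)
    then have "finite (post E u)" using fin finite_subset by blast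
    then obtain j where "post E u \<subseteq> ?C j"
      using finite_in_chain[of "post E u" ?C, OF _ u(2) chain_mono_le] by blast
    then have "u \<in> ?C (Suc j)" using u(1) unfolding chain_Suc attr_step_def by blast
    then show "u \<in> (\<Union>j. ?C j)" by blast
  qed
  moreover have "U \<subseteq> (\<Union>j. ?C j)" using chain_0[of V E p VE VO k U] by blast
  moreover have "(\<Union>j. ?C j) \<subseteq> V_ge V p k" using chain_sub_Vge[OF U] by blast
  ultimately show ?thesis unfolding attr_def by blast
qed

lemma local_closed:
  assumes game: "parity_game V E p VE VO"
    and strat: "odd_strategy E VO \<sigma>D"
    and cl: "closed_on E \<sigma>D D"
    and u: "u \<in> D" and e: "(u, w) \<in> E" and c: "u \<in> dom \<sigma>D \<longrightarrow> \<sigma>D u = Some w"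
  shows "w \<in> D"
proof -
  define nxt where "nxt x = (if x \<in> dom \<sigma>D then the (\<sigma>D x) else (SOME y. (x, y) \<in> E))" for x
  have EV: "E \<subseteq> V \<times> V" and tot: "\<forall>v\<in>V. \<exists>w. (v, w) \<in> E"
    using game by (auto simp: parity_game_def)
  have nE: "(x, nxt x) \<in> E" if "x \<in> V" for x
  proof (cases "x \<in> dom \<sigma>D")
    case True then show ?thesis using strat by (auto simp: nxt_def odd_strategy_def)
  next
    case False
    then show ?thesis using tot that by (auto simp: nxt_def intro: someI_ex)
  qed
  have inV: "(nxt ^^ m) w \<in> V" for m
  proof (induction m)
    case 0 then show ?case using e EV by auto
  next
    case (Suc m) then show ?case using nE EV by auto
  qed
  define Q where "Q n = (case n of 0 \<Rightarrow> u | Suc m \<Rightarrow> (nxt ^^ m) w)" for n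
  have "consistent E \<sigma>D Q"
    unfolding consistent_def is_play_def
  proof (intro conjI allI impI)
    fix i show "(Q i, Q (Suc i)) \<in> E"
      using e nE inV by (cases i) (auto simp: Q_def)
  next
    fix i assume "Q i \<in> dom \<sigma>D"
    then show "\<sigma>D (Q i) = Some (Q (Suc i))"
      using c by (cases i) (auto simp: Q_def nxt_def)
  qed
  moreover have "Q 0 \<in> D" using u by (simp add: Q_def)
  ultimately have "\<forall>i. Q i \<in> D" using cl unfolding closed_on_def by (intro allI) (elim allE impE, rule conjI)
  then have "Q (Suc 0) \<in> D" by (rule spec)
  moreover have "Q (Suc 0) = w" by (simp add: Q_def)
  ultimately show ?thesis by simp
qed

lemma INFM_shift_eq:
  fixes P :: "nat \<Rightarrow> 'v" and N :: nat
  shows "(\<exists>\<^sub>\<infinity> i. p (P (i + N)) = q) = (\<exists>\<^sub>\<infinity> i. p (P i) = (q::nat))"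
proof
  assume h: "\<exists>\<^sub>\<infinity> i. p (P (i + N)) = q"
  show "\<exists>\<^sub>\<infinity> i. p (P i) = q" unfolding INFM_nat
  proof
    fix m
    obtain n where "n > m" "p (P (n + N)) = q" using h unfolding INFM_nat by blast
    then show "\<exists>n>m. p (P n) = q" by (intro exI[of _ "n + N"]) simp
  qed
next
  assume h: "\<exists>\<^sub>\<infinity> i. p (P i) = q"
  show "\<exists>\<^sub>\<infinity> i. p (P (i + N)) = q" unfolding INFM_nat
  proof
    fix m
    obtain n where "n > m + N" "p (P n) = q" using h unfolding INFM_nat by blast
    then show "\<exists>n>m. p (P (n + N)) = q" by (intro exI[of _ "n - N"]) simp
  qed
qed

lemma odd_wins_shift:
  fixes P :: "nat \<Rightarrow> 'v" and N :: nat
  shows "odd_wins_play p (\<lambda>i. P (i + N)) = odd_wins_play p P"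
  unfolding odd_wins_play_def INFM_shift_eq by (rule refl)

theorem lemma4:
  fixes V :: "'v set" and E :: "('v \<times> 'v) set" and p :: "'v \<Rightarrow> nat"
    and VE VO D :: "'v set" and k :: nat and v :: 'v
    and \<sigma>D \<sigma>Attr :: "'v \<Rightarrow> 'v option"
  assumes game: "parity_game V E p VE VO"
    and dom: "odd_dominion V E p VO D"
    and k_odd: "odd k"
    and D_ge: "\<forall>w\<in>D. p w \<ge> k"
    and v_D: "v \<in> D" and pv: "p v = k"
    and \<sigma>D_strat: "odd_strategy E VO \<sigma>D"
    and \<sigma>D_win: "odd_winning_on E p \<sigma>D D"
    and \<sigma>D_closed: "closed_on E \<sigma>D D"
    and \<sigma>Attr: "attracting_strategy V E p VE VO k {v} \<sigma>Attr"
  shows "odd_winning_on E p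
           (\<lambda>w. if w \<in> dom \<sigma>Attr then \<sigma>Attr w else \<sigma>D w)
           (D \<union> attr V E p VE VO k {v})
       \<and> (\<forall>P. consistent E (\<lambda>w. if w \<in> dom \<sigma>Attr then \<sigma>Attr w else \<sigma>D w) P
              \<and> P 0 \<in> D \<union> attr V E p VE VO k {v} \<longrightarrow> (\<forall>i. p (P i) \<ge> k))"
proof -
  define \<sigma> where "\<sigma> = (\<lambda>w. if w \<in> dom \<sigma>Attr then \<sigma>Attr w else \<sigma>D w)"
  define A where "A = attr V E p VE VO k {v}"
  define C where "C = attr_chain V E p VE VO k {v}"
  have fin: "finite V" and EV: "E \<subseteq> V \<times> V" and VV: "VE \<union> VO = V" and disj: "VE \<inter> VO = {}"
    using game by (auto simp: parity_game_def)
  have DV: "D \<subseteq> V" using dom by (simp add: odd_dominion_def)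
  have vge: "{v} \<subseteq> V_ge V p k" using v_D DV pv by (auto simp: V_ge_def)
  have domA: "dom \<sigma>Attr = (A - {v}) \<inter> VO" using \<sigma>Attr by (simp add: attracting_strategy_def A_def)
  have CA: "C j \<subseteq> A" for j unfolding C_def A_def by (rule chain_sub_attr)
  have AC: "A \<subseteq> (\<Union>j. C j)" unfolding A_def C_def using attr_sub_chain[OF fin EV vge] .
  have Cge: "C j \<subseteq> V_ge V p k" for j unfolding C_def using chain_sub_Vge[OF vge] .
  have Age: "A \<subseteq> V_ge V p k" using AC Cge by blast
  have C0: "C 0 = {v}" by (simp add: C_def chain_0)
  have \<sigma>_out: "u \<notin> A \<or> u = v \<Longrightarrow> \<sigma> u = \<sigma>D u" for u using domA by (auto simp: \<sigma>_def)
  have down: "w \<in> C n" if u: "u \<in> C (Suc n)" "u \<notin> C n" "u \<noteq> v" and e: "(u, w) \<in> E"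
    and c: "u \<in> dom \<sigma> \<longrightarrow> \<sigma> u = Some w" for u w n
  proof (cases "u \<in> VO")
    case True
    then have ud: "u \<in> dom \<sigma>Attr" using domA u CA by blast
    then have "\<sigma> u = \<sigma>Attr u" by (simp add: \<sigma>_def)
    with ud c have "\<sigma>Attr u = Some w" by (auto simp: dom_def)
    moreover have "the (\<sigma>Attr u) \<in> C n" using \<sigma>Attr ud u unfolding attracting_strategy_def C_def by blast
    ultimately show ?thesis by simp
  next
    case False
    then show ?thesis using u(1,2) e unfolding C_def chain_Suc attr_step_def post_def by blast
  qed
  have part2: "\<forall>i. P i \<in> D \<union> A" if P: "consistent E \<sigma> P" "P 0 \<in> D \<union> A" for P
  proof
    fix i show "P i \<in> D \<union> A"
    proof (induction i)
      case 0 then show ?case using P by simp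
    next
      case (Suc i)
      have e: "(P i, P (Suc i)) \<in> E" and c: "P i \<in> dom \<sigma> \<longrightarrow> \<sigma> (P i) = Some (P (Suc i))"
        using P(1) by (auto simp: consistent_def is_play_def)
      show ?case
      proof (cases "P i \<in> A - {v}")
        case True
        then obtain n where n: "P i \<in> C n" using AC by blast
        define m where "m = (LEAST m. P i \<in> C m)"
        have m2: "P i \<in> C m" unfolding m_def using n by (rule LeastI)
        have m3: "\<forall>m'<m. P i \<notin> C m'"
        proof (intro allI impI)
          fix m' assume "m' < m" then show "P i \<notin> C m'" unfolding m_def by (rule not_less_Least)
        qed
        note m = n m2 m3
        have "m \<noteq> 0"
        proof
          assume "m = 0" with m2 C0 True show False by simp
        qed
        then obtain j where j: "m = Suc j" by (cases m) auto
        have "P (Suc i) \<in> C j" using down[of "P i" j "P (Suc i)"] m j True e c by auto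
        then show ?thesis using CA by blast
      next
        case False
        then have Di: "P i \<in> D" using Suc v_D by auto
        have "\<sigma> (P i) = \<sigma>D (P i)" using False \<sigma>_out by blast
        then have "P i \<in> dom \<sigma>D \<longrightarrow> \<sigma>D (P i) = Some (P (Suc i))" using c by (auto simp: dom_def)
        then show ?thesis using local_closed[OF game \<sigma>D_strat \<sigma>D_closed Di e] by blast
      qed
    qed
  qed
  have ge: "\<forall>i. p (P i) \<ge> k" if P: "consistent E \<sigma> P" "P 0 \<in> D \<union> A" for P
    using part2[OF P] D_ge Age by (auto simp: V_ge_def)
  have win: "odd_wins_play p P" if P: "consistent E \<sigma> P" "P 0 \<in> D \<union> A" for P
  proof -
    have inv: "P i \<in> D \<union> A" for i using part2[OF P] by blast
    have e: "(P i, P (Suc i)) \<in> E" and c: "P i \<in> dom \<sigma> \<longrightarrow> \<sigma> (P i) = Some (P (Suc i))" for i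
      using P(1) by (auto simp: consistent_def is_play_def)
    have reach: "P i \<in> C n \<Longrightarrow> \<exists>m\<ge>i. P m = v" for n i
    proof (induction n arbitrary: i)
      case 0 then show ?case using C0 by auto
    next
      case (Suc n)
      show ?case
      proof (cases "P i \<in> C n")
        case True then show ?thesis using Suc.IH by blast
      next
        case False
        show ?thesis
        proof (cases "P i = v")
          case True then show ?thesis by blast
        next
          case nv: False
          have "P (Suc i) \<in> C n" using down[OF Suc.prems False nv e c] .
          from Suc.IH[OF this] obtain m where "m \<ge> Suc i" "P m = v" by blast
          then show ?thesis by (intro exI[of _ m]) auto
        qed
      qed
    qed
    show ?thesis
    proof (cases "\<exists>\<^sub>\<infinity> i. P i = v")
      case True
      then have inf: "\<exists>\<^sub>\<infinity> i. p (P i) = k" using pv by (auto elim: INFM_mono)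
      have "(LEAST q. \<exists>\<^sub>\<infinity> i. p (P i) = q) = k"
      proof (rule Least_equality)
        show "\<exists>\<^sub>\<infinity> i. p (P i) = k" by (rule inf)
      next
        fix q assume "\<exists>\<^sub>\<infinity> i. p (P i) = q"
        then obtain i where "p (P i) = q" by (rule INFM_E)
        then show "k \<le> q" using ge[OF P] by auto
      qed
      then show ?thesis using k_odd by (simp add: odd_wins_play_def)
    next
      case False
      then have "\<forall>\<^sub>\<infinity> i. P i \<noteq> v" by (simp add: not_INFM)
      then obtain N where N: "\<forall>i\<ge>N. P i \<noteq> v" unfolding MOST_nat_le by blast
      have notA: "P i \<notin> A" if "i \<ge> N" for i
      proof
        assume "P i \<in> A"
        then obtain n where "P i \<in> C n" using AC by blast
        from reach[OF this] obtain m where "m \<ge> i" "P m = v" by blast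
        then show False using N that by auto
      qed
      define Q where "Q i = P (i + N)" for i
      have "consistent E \<sigma>D Q"
        unfolding consistent_def is_play_def
      proof (intro conjI allI impI)
        fix i show "(Q i, Q (Suc i)) \<in> E" using e[of "i+N"] by (simp add: Q_def)
      next
        fix i assume h: "Q i \<in> dom \<sigma>D"
        have "\<sigma> (P (i+N)) = \<sigma>D (P (i+N))" using \<sigma>_out notA[of "i+N"] by auto
        with h c[of "i+N"] show "\<sigma>D (Q i) = Some (Q (Suc i))" by (auto simp: Q_def dom_def)
      qed
      moreover have "Q 0 \<in> D" using inv[of N] notA[of N] by (simp add: Q_def)
      ultimately have "odd_wins_play p Q" using \<sigma>D_win unfolding odd_winning_on_def by blast
      then show ?thesis unfolding Q_def odd_wins_shift .
    qed
  qed
  have "odd_winning_on E p \<sigma> (D \<union> A) \<and> (\<forall>P. consistent E \<sigma> P \<and> P 0 \<in> D \<union> A \<longrightarrow> (\<forall>i. p (P i) \<ge> k))"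
    using win ge unfolding odd_winning_on_def by blast
  then show ?thesis unfolding \<sigma>_def A_def .
qed

end
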